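(* Let $G$ be a finite connected weighted graph with $N$ vertices and let $0=\lambda_0<\lambda_1\le\cdots\le\lambda_{N-1}$ be the eigenvalues (with multiplicity) of its weighted Laplacian $L_w$. Let $0\le k\le N-1$. Then for every $S_0\subset V(G)$ with $|S_0|\le k$ and every partition $\mathcal{S}=(S_m)_{m=0,\ldots,n}$ of $V(G)$ with initial set $S_0$ and $K_m(\mathcal{S})>0$ for $m=0,\ldots,n-1$, \[ \lambda_k\ge\left(2\delta_{\mathcal{S},2}^2\right)^{-1}; \] equivalently, $\lambda_k\ge\max_{\mathcal{S}}(2\delta_{\mathcal{S},2}^2)^{-1}$, the maximum over all such partitions whose initial set has at most $k$ elements.
   Context: $G$ has vertex set $V(G)$ and symmetric weights $w\ge0$ with $w(u,u)=0$; connected with respect to edges $\{w(u,v)>0\}$. $(L_wf)(v)=\sum_u(f(v)-f(u))w(v,u)$ on $\ell^2(G)$ (vertex weight $\nu\equiv1$). $w_A(v)=\sum_{u\in A}w(u,v)$; $D_m=\sup_{v\in S_m}w_{S_{m+1}}(v)$, $K_m=\inf_{v\in S_{m+1}}w_{S_m}(v)$; $\delta_{\mathcal{S},2}=\left(\sum_{m=1}^n\sum_{j=1}^m\frac{1}{K_{j-1}}\prod_{i=j}^{m-1}\frac{D_i}{K_i}\right)^{1/2}$ (empty products $=1$, empty sums $=0$). *)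

theory Defs
  imports "Jordan_Normal_Form.Char_Poly"
begin

text \<open>Vertices are 0,...,N-1; w :: nat => nat => real is the edge weight.\<close>

definition weighted_graph :: "nat \<Rightarrow> (nat \<Rightarrow> nat \<Rightarrow> real) \<Rightarrow> bool" where
  "weighted_graph N w \<longleftrightarrow>
     (\<forall>u<N. \<forall>v<N. w u v \<ge> 0 \<and> w u v = w v u) \<and> (\<forall>u<N. w u u = 0)"

definition connected_wg :: "nat \<Rightarrow> (nat \<Rightarrow> nat \<Rightarrow> real) \<Rightarrow> bool" where
  "connected_wg N w \<longleftrightarrow>
     (\<forall>u<N. \<forall>v<N. (\<lambda>x y. x < N \<and> y < N \<and> w x y > 0)\<^sup>*\<^sup>* u v)"

text \<open>Matrix of the weighted Laplacian (vertex weight 1):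
  (L f)(v) = sum_u (f v - f u) w(v,u).\<close>
definition laplacian :: "nat \<Rightarrow> (nat \<Rightarrow> nat \<Rightarrow> real) \<Rightarrow> real mat" where
  "laplacian N w = mat N N (\<lambda>(v, u).
      (if v = u then (\<Sum>x<N. w v x) else 0) - w v u)"

definition wA :: "(nat \<Rightarrow> nat \<Rightarrow> real) \<Rightarrow> nat set \<Rightarrow> nat \<Rightarrow> real" where
  "wA w A v = (\<Sum>u\<in>A. w u v)"

definition Dm :: "(nat \<Rightarrow> nat \<Rightarrow> real) \<Rightarrow> (nat \<Rightarrow> nat set) \<Rightarrow> nat \<Rightarrow> real" where
  "Dm w S m = Sup (wA w (S (Suc m)) ` S m)"

definition Km :: "(nat \<Rightarrow> nat \<Rightarrow> real) \<Rightarrow> (nat \<Rightarrow> nat set) \<Rightarrow> nat \<Rightarrow> real" where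
  "Km w S m = Inf (wA w (S m) ` S (Suc m))"

definition delta2 :: "(nat \<Rightarrow> nat \<Rightarrow> real) \<Rightarrow> (nat \<Rightarrow> nat set) \<Rightarrow> nat \<Rightarrow> real" where
  "delta2 w S n = sqrt (\<Sum>m=1..n. \<Sum>j=1..m.
      (1 / Km w S (j - 1)) * (\<Prod>i=j..<m. Dm w S i / Km w S i))"

definition is_partition :: "nat \<Rightarrow> (nat \<Rightarrow> nat set) \<Rightarrow> nat \<Rightarrow> bool" where
  "is_partition N S n \<longleftrightarrow>
     (\<Union>m\<le>n. S m) = {0..<N} \<and>
     (\<forall>m\<le>n. \<forall>m'\<le>n. m \<noteq> m' \<longrightarrow> S m \<inter> S m' = {}) \<and>
     (\<forall>m. 1 \<le> m \<and> m \<le> n \<longrightarrow> S m \<noteq> {})"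

end

theory Submission
  imports Defs "Jordan_Normal_Form.Schur_Decomposition"
begin

lemma sum_upto_tri:
  fixes f :: "nat \<Rightarrow> real"
  assumes "j < N" and "\<forall>i<N. i > j \<longrightarrow> f i = 0"
  shows "(\<Sum>i<N. f i) = (\<Sum>i\<le>j. f i)"
using assms by (intro sum.mono_neutral_right) auto

lemma schur_functions:
  fixes A :: "real mat"
  assumes A: "A \<in> carrier_mat N N" and cp: "char_poly A = (\<Prod>e\<leftarrow>lam. [:- e, 1:])"
  shows "\<exists>p Bf. (\<forall>j<N. \<forall>x<N. (\<Sum>y<N. A$$(x,y) * p j y) = (\<Sum>l\<le>j. Bf l j * p l x))
     \<and> (\<forall>j<N. Bf j j = lam ! j)
     \<and> (\<forall>a. (\<forall>x<N. (\<Sum>j<N. a j * p j x) = 0) \<longrightarrow> (\<forall>j<N. a j = 0))"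
proof -
  obtain B P Q where sd: "schur_decomposition A lam = (B,P,Q)" by (cases "schur_decomposition A lam") auto
  from schur_decomposition[OF A cp sd] have sim: "similar_mat_wit A B P Q"
    and ut: "upper_triangular B" and dg: "diag_mat B = lam" by auto
  from sim A have B: "B \<in> carrier_mat N N" and P: "P \<in> carrier_mat N N" and Q: "Q \<in> carrier_mat N N"
    and PQ: "P * Q = 1\<^sub>m N" and QP: "Q * P = 1\<^sub>m N" and AE: "A = P * B * Q"
    unfolding similar_mat_wit_def Let_def by auto
  have AP: "A * P = P * B"
  proof -
    have "A * P = P * B * Q * P" using AE by simp
    also have "\<dots> = P * B * (Q * P)" by (rule assoc_mult_mat[OF mult_carrier_mat[OF P B] Q P])
    also have "\<dots> = P * B" using QP P B by simp
    finally show ?thesis .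
  qed
  define p where "p = (\<lambda>j x. P $$ (x, j))"
  define Bf where "Bf = (\<lambda>l j. B $$ (l, j))"
  have 1: "\<forall>j<N. \<forall>x<N. (\<Sum>y<N. A$$(x,y) * p j y) = (\<Sum>l\<le>j. Bf l j * p l x)"
  proof (intro allI impI)
    fix j x assume j: "j < N" and x: "x < N"
    have "(A * P) $$ (x, j) = (\<Sum>y<N. A$$(x,y) * p j y)"
      using A P j x by (simp add: scalar_prod_def atLeast0LessThan p_def)
    moreover have "(P * B) $$ (x, j) = (\<Sum>l<N. Bf l j * p l x)"
      using B P j x by (simp add: scalar_prod_def atLeast0LessThan p_def Bf_def mult.commute)
    moreover have "(\<Sum>l<N. Bf l j * p l x) = (\<Sum>l\<le>j. Bf l j * p l x)"
      using ut B j by (intro sum_upto_tri) (auto simp: upper_triangular_def Bf_def)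
    ultimately show "(\<Sum>y<N. A$$(x,y) * p j y) = (\<Sum>l\<le>j. Bf l j * p l x)" using AP by simp
  qed
  have 2: "\<forall>j<N. Bf j j = lam ! j"
  proof (intro allI impI)
    fix j assume j: "j < N"
    have "lam ! j = diag_mat B ! j" using dg by simp
    also have "\<dots> = B $$ (j, j)" using B j by (simp add: diag_mat_def)
    finally show "Bf j j = lam ! j" by (simp add: Bf_def)
  qed
  have 3: "\<forall>a. (\<forall>x<N. (\<Sum>j<N. a j * p j x) = 0) \<longrightarrow> (\<forall>j<N. a j = 0)"
  proof (intro allI impI)
    fix a i assume h: "\<forall>x<N. (\<Sum>j<N. a j * p j x) = 0" and i: "i < N"
    have "0 = (\<Sum>x<N. Q $$ (i, x) * (\<Sum>j<N. a j * p j x))" using h by simp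
    also have "\<dots> = (\<Sum>x<N. \<Sum>j<N. a j * (Q $$ (i, x) * p j x))" by (simp add: sum_distrib_left mult.assoc mult.left_commute)
    also have "\<dots> = (\<Sum>j<N. \<Sum>x<N. a j * (Q $$ (i, x) * p j x))" by (rule sum.swap)
    also have "\<dots> = (\<Sum>j<N. a j * (\<Sum>x<N. Q $$ (i, x) * p j x))" by (simp add: sum_distrib_left)
    also have "\<dots> = (\<Sum>j<N. a j * (Q * P) $$ (i, j))"
    proof (rule sum.cong[OF refl])
      fix j assume "j \<in> {..<N}"
      hence "(Q * P) $$ (i, j) = (\<Sum>x<N. Q $$ (i, x) * p j x)"
        using Q P i by (simp add: scalar_prod_def p_def atLeast0LessThan)
      thus "a j * (\<Sum>x<N. Q $$ (i, x) * p j x) = a j * (Q * P) $$ (i, j)" by simp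
    qed
    also have "\<dots> = (\<Sum>j<N. if j = i then a j else 0)"
      using QP i by (intro sum.cong) auto
    also have "\<dots> = a i" using i by simp
    finally show "a i = 0" by simp
  qed
  show ?thesis by (rule exI[of _ p], rule exI[of _ Bf]) (use 1 2 3 in \<open>simp only:\<close>)
qed

definition ip :: "nat \<Rightarrow> (nat \<Rightarrow> real) \<Rightarrow> (nat \<Rightarrow> real) \<Rightarrow> real" where
  "ip N g h = (\<Sum>x<N. g x * h x)"
definition Lop :: "nat \<Rightarrow> (nat \<Rightarrow> nat \<Rightarrow> real) \<Rightarrow> (nat \<Rightarrow> real) \<Rightarrow> nat \<Rightarrow> real" where
  "Lop N M g x = (\<Sum>y<N. M x y * g y)"
definition inspan :: "nat \<Rightarrow> (nat \<Rightarrow> nat \<Rightarrow> real) \<Rightarrow> nat \<Rightarrow> (nat \<Rightarrow> real) \<Rightarrow> bool" where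
  "inspan N P k g \<longleftrightarrow> (\<exists>d. \<forall>x<N. g x = (\<Sum>l<k. d l * P l x))"

lemma ip_sym: "ip N g h = ip N h g" by (simp add: ip_def mult.commute)

lemma ip_nonneg: "ip N g g \<ge> 0" unfolding ip_def by (intro sum_nonneg) simp

lemma ip_zero: assumes "ip N g g = 0" "x < N" shows "g x = 0"
proof -
  have "\<forall>y\<in>{..<N}. g y * g y = 0" using assms(1) unfolding ip_def
    by (subst sum_nonneg_eq_0_iff[symmetric]) auto
  thus ?thesis using assms(2) by auto
qed

lemma ip_cong: "(\<And>x. x < N \<Longrightarrow> g x = g' x) \<Longrightarrow> (\<And>x. x < N \<Longrightarrow> h x = h' x) \<Longrightarrow> ip N g h = ip N g' h'"
  unfolding ip_def by (intro sum.cong) auto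

lemma ip_sum_left: "ip N (\<lambda>x. \<Sum>i\<in>A. c i * q i x) h = (\<Sum>i\<in>A. c i * ip N (q i) h)"
proof -
  have "ip N (\<lambda>x. \<Sum>i\<in>A. c i * q i x) h = (\<Sum>x<N. \<Sum>i\<in>A. c i * (q i x * h x))"
    unfolding ip_def by (simp add: sum_distrib_right mult.assoc)
  also have "\<dots> = (\<Sum>i\<in>A. \<Sum>x<N. c i * (q i x * h x))" by (rule sum.swap)
  also have "\<dots> = (\<Sum>i\<in>A. c i * ip N (q i) h)" unfolding ip_def by (simp add: sum_distrib_left)
  finally show ?thesis .
qed

lemma ip_diff_left: "ip N (\<lambda>x. g x - g' x) h = ip N g h - ip N g' h"
  unfolding ip_def by (simp add: left_diff_distrib sum_subtractf)

lemma ip_scale_left: "ip N (\<lambda>x. a * g x) h = a * ip N g h"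
  unfolding ip_def by (simp add: sum_distrib_left mult.assoc)

lemma Lop_sum: "Lop N M (\<lambda>x. \<Sum>i\<in>A. c i * q i x) x = (\<Sum>i\<in>A. c i * Lop N M (q i) x)"
proof -
  have "Lop N M (\<lambda>x. \<Sum>i\<in>A. c i * q i x) x = (\<Sum>y<N. \<Sum>i\<in>A. c i * (M x y * q i y))"
    unfolding Lop_def by (simp add: sum_distrib_left mult.left_commute)
  also have "\<dots> = (\<Sum>i\<in>A. \<Sum>y<N. c i * (M x y * q i y))" by (rule sum.swap)
  also have "\<dots> = (\<Sum>i\<in>A. c i * Lop N M (q i) x)" unfolding Lop_def by (simp add: sum_distrib_left)
  finally show ?thesis .
qed

lemma Lop_diff: "Lop N M (\<lambda>x. g x - g' x) x = Lop N M g x - Lop N M g' x"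
  unfolding Lop_def by (simp add: right_diff_distrib sum_subtractf)

lemma Lop_sym: assumes "\<forall>x<N. \<forall>y<N. M x y = M y x"
  shows "ip N (Lop N M g) h = ip N g (Lop N M h)"
proof -
  have "ip N (Lop N M g) h = (\<Sum>x<N. \<Sum>y<N. M x y * g y * h x)"
    by (simp add: ip_def Lop_def sum_distrib_right)
  also have "\<dots> = (\<Sum>y<N. \<Sum>x<N. M x y * g y * h x)" by (rule sum.swap)
  also have "\<dots> = (\<Sum>y<N. g y * (\<Sum>x<N. M y x * h x))"
    unfolding sum_distrib_left
  proof (intro sum.cong refl)
    fix y x assume "y \<in> {..<N}" "x \<in> {..<N}"
    thus "M x y * g y * h x = g y * (M y x * h x)" using assms by simp
  qed
  also have "\<dots> = ip N g (Lop N M h)" by (simp add: ip_def Lop_def)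
  finally show ?thesis .
qed

lemma inspan_zero: "inspan N P k (\<lambda>x. 0)"
  unfolding inspan_def by (rule exI[of _ "\<lambda>_. 0"]) simp

lemma inspan_base: "l < k \<Longrightarrow> inspan N P k (P l)"
proof -
  assume l: "l < k"
  have "\<forall>x<N. P l x = (\<Sum>i<k. (if i = l then 1 else 0) * P i x)"
  proof (intro allI impI)
    fix x
    have "(\<Sum>i<k. (if i = l then 1 else 0) * P i x) = (\<Sum>i<k. if i = l then P l x else 0)"
      by (intro sum.cong) auto
    also have "\<dots> = P l x" using l by simp
    finally show "P l x = (\<Sum>i<k. (if i = l then 1 else 0) * P i x)" by simp
  qed
  thus ?thesis unfolding inspan_def by (rule exI[of _ "\<lambda>i. if i = l then 1 else 0"])
qed

lemma inspan_lin: assumes "inspan N P k g" "inspan N P k h"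
  shows "inspan N P k (\<lambda>x. a * g x + b * h x)"
proof -
  obtain d e where d: "\<forall>x<N. g x = (\<Sum>l<k. d l * P l x)" and e: "\<forall>x<N. h x = (\<Sum>l<k. e l * P l x)"
    using assms unfolding inspan_def by blast
  show ?thesis unfolding inspan_def
  proof (rule exI[of _ "\<lambda>l. a * d l + b * e l"], intro allI impI)
    fix x assume x: "x < N"
    have "(\<Sum>l<k. (a * d l + b * e l) * P l x) = a * (\<Sum>l<k. d l * P l x) + b * (\<Sum>l<k. e l * P l x)"
      by (simp add: sum.distrib sum_distrib_left distrib_right mult.assoc)
    thus "a * g x + b * h x = (\<Sum>l<k. (a * d l + b * e l) * P l x)" using d e x by simp
  qed
qed

lemma inspan_sum: assumes "finite A" "\<forall>i\<in>A. inspan N P k (G i)"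
  shows "inspan N P k (\<lambda>x. \<Sum>i\<in>A. c i * G i x)"
  using assms
proof (induction A rule: finite_induct)
  case empty thus ?case by (simp add: inspan_zero)
next
  case (insert a A)
  have "inspan N P k (\<lambda>x. c a * G a x + 1 * (\<Sum>i\<in>A. c i * G i x))"
    using insert by (intro inspan_lin) auto
  thus ?case using insert by simp
qed

lemma inspan_mono: assumes "inspan N P k g" "k \<le> k'" shows "inspan N P k' g"
proof -
  obtain d where d: "\<forall>x<N. g x = (\<Sum>l<k. d l * P l x)" using assms unfolding inspan_def by blast
  have "\<forall>x<N. g x = (\<Sum>l<k'. (if l < k then d l else 0) * P l x)"
  proof (intro allI impI)
    fix x assume "x < N"
    have "(\<Sum>l<k'. (if l < k then d l else 0) * P l x) = (\<Sum>l<k. (if l < k then d l else 0) * P l x)"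
      using assms(2) by (intro sum.mono_neutral_right) auto
    thus "g x = (\<Sum>l<k'. (if l < k then d l else 0) * P l x)" using d \<open>x < N\<close> by simp
  qed
  thus ?thesis unfolding inspan_def by (rule exI[of _ "\<lambda>l. if l < k then d l else 0"])
qed

lemma inspan_cong: assumes "\<forall>l<k. P l = P' l" "inspan N P k g" shows "inspan N P' k g"
proof -
  obtain d where d: "\<forall>x<N. g x = (\<Sum>l<k. d l * P l x)" using assms unfolding inspan_def by blast
  have "\<forall>x<N. g x = (\<Sum>l<k. d l * P' l x)"
  proof (intro allI impI)
    fix x assume "x < N"
    hence "g x = (\<Sum>l<k. d l * P l x)" using d by blast
    also have "\<dots> = (\<Sum>l<k. d l * P' l x)" using assms(1) by (intro sum.cong) auto
    finally show "g x = (\<Sum>l<k. d l * P' l x)" .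
  qed
  thus ?thesis unfolding inspan_def by (rule exI[of _ "d"])
qed

lemma inspan_eq: assumes "inspan N P k g" "\<forall>x<N. g' x = g x" shows "inspan N P k g'"
proof -
  obtain d where d: "\<forall>x<N. g x = (\<Sum>l<k. d l * P l x)" using assms unfolding inspan_def by blast
  hence "\<forall>x<N. g' x = (\<Sum>l<k. d l * P l x)" using assms(2) by simp
  thus ?thesis unfolding inspan_def by (rule exI[of _ "d"])
qed

lemma orth_sum:
  fixes q :: "nat \<Rightarrow> nat \<Rightarrow> real" and d :: "nat \<Rightarrow> real"
  assumes orth: "\<forall>j<m. \<forall>i<j. ip N (q i) (q j) = 0" and i: "i < m"
  shows "(\<Sum>i'<m. d i' * ip N (q i') (q i)) = d i * ip N (q i) (q i)"
proof -
  have "(\<Sum>i'<m. d i' * ip N (q i') (q i)) = (\<Sum>i'<m. if i' = i then d i * ip N (q i) (q i) else 0)"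
  proof (intro sum.cong refl)
    fix i' assume i': "i' \<in> {..<m}"
    show "d i' * ip N (q i') (q i) = (if i' = i then d i * ip N (q i) (q i) else 0)"
    proof (cases "i' = i")
      case False
      hence "i' < i \<or> i < i'" by (simp add: nat_neq_iff)
      hence "ip N (q i') (q i) = 0"
      proof
        assume "i' < i" thus ?thesis using orth i by blast
      next
        assume "i < i'" hence "ip N (q i) (q i') = 0" using orth i' by blast
        thus ?thesis by (simp add: ip_sym)
      qed
      thus ?thesis using False by simp
    qed simp
  qed
  also have "\<dots> = d i * ip N (q i) (q i)" using i by simp
  finally show ?thesis .
qed

lemma nonzero_from_span:
  assumes indep: "\<forall>a. (\<forall>x<N. (\<Sum>j<N. a j * p j x) = 0) \<longrightarrow> (\<forall>j<N. a j = 0)"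
  and j: "j < N" and sp: "inspan N p j (\<lambda>x. g x - p j x)"
  shows "ip N g g > 0"
proof (rule ccontr)
  assume "\<not> ip N g g > 0"
  hence z: "ip N g g = 0" using ip_nonneg[of N g] by linarith
  obtain d where d: "\<forall>x<N. g x - p j x = (\<Sum>l<j. d l * p l x)" using sp unfolding inspan_def by blast
  define a where "a = (\<lambda>l. if l < j then d l else if l = j then 1 else 0::real)"
  have "\<forall>x<N. (\<Sum>l<N. a l * p l x) = 0"
  proof (intro allI impI)
    fix x assume x: "x < N"
    have "(\<Sum>l<N. a l * p l x) = (\<Sum>l<Suc j. a l * p l x)"
      using j by (intro sum.mono_neutral_right) (auto simp: a_def)
    also have "\<dots> = (\<Sum>l<j. a l * p l x) + p j x" by (simp add: a_def)
    also have "(\<Sum>l<j. a l * p l x) = (\<Sum>l<j. d l * p l x)" by (intro sum.cong) (auto simp: a_def)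
    also have "\<dots> = g x - p j x" using d x by simp
    also have "g x = 0" using ip_zero[OF z x] .
    finally show "(\<Sum>l<N. a l * p l x) = 0" by simp
  qed
  hence "a j = 0" using indep j by blast
  thus False by (simp add: a_def)
qed

lemma gs_eigen:
  fixes M p B :: "nat \<Rightarrow> nat \<Rightarrow> real" and lam :: "nat \<Rightarrow> real"
  assumes sym: "\<forall>x<N. \<forall>y<N. M x y = M y x"
  and tri: "\<forall>j<N. \<forall>x<N. Lop N M (p j) x = (\<Sum>l\<le>j. B l j * p l x)"
  and diag: "\<forall>j<N. B j j = lam j"
  and indep: "\<forall>a. (\<forall>x<N. (\<Sum>j<N. a j * p j x) = 0) \<longrightarrow> (\<forall>j<N. a j = 0)"
  shows "m \<le> N \<Longrightarrow> \<exists>q. \<forall>j<m. inspan N p j (\<lambda>x. q j x - p j x) \<and> inspan N q (Suc j) (p j)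
          \<and> (\<forall>x<N. Lop N M (q j) x = lam j * q j x) \<and> (\<forall>i<j. ip N (q i) (q j) = 0)"
proof (induction m)
  case 0 show ?case by simp
next
  case (Suc m)
  then obtain q where IH: "\<forall>j<m. inspan N p j (\<lambda>x. q j x - p j x) \<and> inspan N q (Suc j) (p j)
          \<and> (\<forall>x<N. Lop N M (q j) x = lam j * q j x) \<and> (\<forall>i<j. ip N (q i) (q j) = 0)" by auto
  have mN: "m < N" using Suc by simp
  have orthq: "\<forall>j<m. \<forall>i<j. ip N (q i) (q j) = 0" using IH by blast
  have eigq: "\<forall>j<m. \<forall>x<N. Lop N M (q j) x = lam j * q j x" using IH by blast
  have pos: "\<forall>j<m. ip N (q j) (q j) > 0"
  proof (intro allI impI)
    fix j assume j: "j < m"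
    show "ip N (q j) (q j) > 0"
      by (rule nonzero_from_span[where j=j, OF indep]) (use IH j mN in auto)
  qed
  define c where "c = (\<lambda>i. ip N (p m) (q i) / ip N (q i) (q i))"
  define qm where "qm = (\<lambda>x. p m x - (\<Sum>i<m. c i * q i x))"
  define q' where "q' = q(m := qm)"
  have orth: "\<forall>i<m. ip N (q i) qm = 0"
  proof (intro allI impI)
    fix i assume i: "i < m"
    have "ip N qm (q i) = ip N (p m) (q i) - (\<Sum>i'<m. c i' * ip N (q i') (q i))"
      unfolding qm_def by (simp add: ip_diff_left ip_sum_left)
    also have "(\<Sum>i'<m. c i' * ip N (q i') (q i)) = c i * ip N (q i) (q i)"
      by (rule orth_sum[OF orthq i])
    also have "c i * ip N (q i) (q i) = ip N (p m) (q i)"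
    proof -
      have "ip N (q i) (q i) \<noteq> 0" using pos i by (metis less_irrefl)
      thus ?thesis by (simp add: c_def)
    qed
    finally show "ip N (q i) qm = 0" by (simp add: ip_sym)
  qed
  have spq: "\<forall>i<m. inspan N p m (q i)"
  proof (intro allI impI)
    fix i assume i: "i < m"
    have "inspan N p m (\<lambda>x. 1 * p i x + 1 * (q i x - p i x))"
      by (rule inspan_lin) (use i IH in \<open>auto intro: inspan_base inspan_mono\<close>)
    thus "inspan N p m (q i)" by (rule inspan_eq) simp
  qed
  have a: "inspan N p m (\<lambda>x. qm x - p m x)"
  proof -
    have "inspan N p m (\<lambda>x. \<Sum>i<m. (- c i) * q i x)"
      by (rule inspan_sum) (use spq in auto)
    thus ?thesis by (rule inspan_eq) (simp add: qm_def sum_negf)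
  qed
  have b: "inspan N q' (Suc m) (p m)"
  proof -
    have "inspan N q' (Suc m) (\<lambda>x. 1 * q' m x + 1 * (\<Sum>i<m. c i * q' i x))"
      by (intro inspan_lin inspan_base inspan_sum) (auto intro: inspan_base)
    moreover have "\<forall>x<N. p m x = 1 * q' m x + 1 * (\<Sum>i<m. c i * q' i x)"
      by (simp add: q'_def qm_def)
    ultimately show ?thesis by (rule inspan_eq)
  qed
  have e: "\<forall>x<N. Lop N M qm x = lam m * qm x"
  proof -
    define r where "r = (\<lambda>x. Lop N M qm x - lam m * qm x)"
    have rexp: "\<forall>x<N. r x = 1 * (\<Sum>l<m. B l m * p l x) + 1 * (\<Sum>i<m. (c i * (lam m - lam i)) * q i x)"
    proof (intro allI impI)
      fix x assume x: "x < N"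
      have L1: "Lop N M qm x = Lop N M (p m) x - (\<Sum>i<m. c i * Lop N M (q i) x)"
        unfolding qm_def by (simp add: Lop_diff Lop_sum)
      have L2: "Lop N M (p m) x = (\<Sum>l<m. B l m * p l x) + lam m * p m x"
      proof -
        have "Lop N M (p m) x = (\<Sum>l<Suc m. B l m * p l x)"
          using tri mN x by (simp add: lessThan_Suc_atMost)
        thus ?thesis using diag mN by simp
      qed
      have L3: "(\<Sum>i<m. c i * Lop N M (q i) x) = (\<Sum>i<m. c i * (lam i * q i x))"
        using eigq x by (intro sum.cong) auto
      have L4: "(\<Sum>i<m. (c i * (lam m - lam i)) * q i x)
          = lam m * (\<Sum>i<m. c i * q i x) - (\<Sum>i<m. c i * (lam i * q i x))"
      proof -
        have "(\<Sum>i<m. (c i * (lam m - lam i)) * q i x)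
           = (\<Sum>i<m. lam m * (c i * q i x) - c i * (lam i * q i x))"
          by (intro sum.cong) (auto simp: algebra_simps)
        thus ?thesis by (simp add: sum_subtractf sum_distrib_left)
      qed
      show "r x = 1 * (\<Sum>l<m. B l m * p l x) + 1 * (\<Sum>i<m. (c i * (lam m - lam i)) * q i x)"
        unfolding r_def L1 L2 L3 L4 by (simp add: qm_def algebra_simps)
    qed
    have rsp: "inspan N q m r"
    proof -
      have p1: "\<forall>l<m. inspan N q m (p l)"
        using IH by (auto intro: inspan_mono)
      have "inspan N q m (\<lambda>x. 1 * (\<Sum>l<m. B l m * p l x) + 1 * (\<Sum>i<m. (c i * (lam m - lam i)) * q i x))"
        by (intro inspan_lin inspan_sum) (use p1 in \<open>auto intro: inspan_base\<close>)
      thus ?thesis by (rule inspan_eq) (use rexp in auto)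
    qed
    then obtain d where d: "\<forall>x<N. r x = (\<Sum>i<m. d i * q i x)" unfolding inspan_def by blast
    have d0: "\<forall>i<m. d i = 0"
    proof (intro allI impI)
      fix i assume i: "i < m"
      have "ip N r (q i) = ip N (\<lambda>x. \<Sum>i<m. d i * q i x) (q i)"
        using d by (intro ip_cong) auto
      also have "\<dots> = d i * ip N (q i) (q i)"
        by (simp add: ip_sum_left orth_sum[OF orthq i])
      finally have r1: "ip N r (q i) = d i * ip N (q i) (q i)" .
      have "ip N r (q i) = ip N (Lop N M qm) (q i) - lam m * ip N qm (q i)"
        unfolding r_def by (simp add: ip_diff_left ip_scale_left)
      also have "ip N qm (q i) = 0" using orth i by (simp add: ip_sym)
      also have "ip N (Lop N M qm) (q i) = ip N qm (Lop N M (q i))" by (rule Lop_sym[OF sym])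
      also have "\<dots> = ip N qm (\<lambda>x. lam i * q i x)" using eigq i by (intro ip_cong) auto
      also have "\<dots> = lam i * ip N (q i) qm" by (simp add: ip_sym[of N qm] ip_scale_left)
      also have "ip N (q i) qm = 0" using orth i by simp
      finally have "ip N r (q i) = 0" by simp
      with r1 pos i show "d i = 0" by (metis less_irrefl mult_eq_0_iff)
    qed
    show ?thesis
    proof (intro allI impI)
      fix x assume x: "x < N"
      have "r x = 0" using d d0 x by simp
      thus "Lop N M qm x = lam m * qm x" by (simp add: r_def)
    qed
  qed
  show ?case
  proof (rule exI[of _ q'], intro allI impI)
    fix j assume j: "j < Suc m"
    show "inspan N p j (\<lambda>x. q' j x - p j x) \<and> inspan N q' (Suc j) (p j)
          \<and> (\<forall>x<N. Lop N M (q' j) x = lam j * q' j x) \<and> (\<forall>i<j. ip N (q' i) (q' j) = 0)"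
    proof (cases "j = m")
      case True
      have "\<forall>i<j. ip N (q' i) (q' j) = 0" using orth True by (simp add: q'_def)
      thus ?thesis using a b e True by (simp add: q'_def)
    next
      case False
      hence jm: "j < m" using j by simp
      have "inspan N q' (Suc j) (p j)"
        by (rule inspan_cong[of _ q]) (use IH jm in \<open>auto simp: q'_def\<close>)
      moreover have "\<forall>i<j. ip N (q' i) (q' j) = 0" using IH jm by (simp add: q'_def)
      ultimately show ?thesis using IH jm by (simp add: q'_def)
    qed
  qed
qed

lemma rayleigh:
  fixes q :: "nat \<Rightarrow> nat \<Rightarrow> real" and a lam :: "nat \<Rightarrow> real"
  assumes sym: "\<forall>x<N. \<forall>y<N. M x y = M y x"
  and orth: "\<forall>j<K. \<forall>i<j. ip N (q i) (q j) = 0"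
  and eig: "\<forall>j<K. \<forall>x<N. Lop N M (q j) x = lam j * q j x"
  and le: "\<forall>j<K. lam j \<le> \<Lambda>"
  and f: "f = (\<lambda>x. \<Sum>j<K. a j * q j x)"
  shows "ip N f (Lop N M f) \<le> \<Lambda> * ip N f f"
    and "ip N f f = (\<Sum>j<K. a j * a j * ip N (q j) (q j))"
proof -
  have fq: "\<forall>j<K. ip N f (q j) = a j * ip N (q j) (q j)"
  proof (intro allI impI)
    fix j assume j: "j < K"
    have "ip N f (q j) = (\<Sum>i<K. a i * ip N (q i) (q j))" unfolding f by (rule ip_sum_left)
    also have "\<dots> = a j * ip N (q j) (q j)" by (rule orth_sum[OF orth j])
    finally show "ip N f (q j) = a j * ip N (q j) (q j)" .
  qed
  have ff: "ip N f f = (\<Sum>j<K. a j * a j * ip N (q j) (q j))"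
  proof -
    have "ip N f f = (\<Sum>j<K. a j * ip N (q j) f)" by (subst (1) f) (rule ip_sum_left)
    also have "\<dots> = (\<Sum>j<K. a j * a j * ip N (q j) (q j))"
      using fq by (intro sum.cong) (auto simp: ip_sym[of N _ f])
    finally show ?thesis .
  qed
  thus "ip N f f = (\<Sum>j<K. a j * a j * ip N (q j) (q j))" .
  have "ip N f (Lop N M f) = ip N (Lop N M f) f" by (simp add: ip_sym)
  also have "\<dots> = ip N (\<lambda>x. \<Sum>j<K. (a j * lam j) * q j x) f"
  proof (rule ip_cong)
    fix x assume x: "x < N"
    have "Lop N M f x = (\<Sum>j<K. a j * Lop N M (q j) x)" unfolding f by (rule Lop_sum)
    also have "\<dots> = (\<Sum>j<K. (a j * lam j) * q j x)" using eig x by (intro sum.cong) auto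
    finally show "Lop N M f x = (\<Sum>j<K. (a j * lam j) * q j x)" .
  qed simp
  also have "\<dots> = (\<Sum>j<K. (a j * lam j) * ip N (q j) f)" by (rule ip_sum_left)
  also have "\<dots> = (\<Sum>j<K. lam j * (a j * a j * ip N (q j) (q j)))"
    using fq by (intro sum.cong) (auto simp: ip_sym[of N _ f])
  also have "\<dots> \<le> (\<Sum>j<K. \<Lambda> * (a j * a j * ip N (q j) (q j)))"
  proof (intro sum_mono mult_right_mono)
    fix j assume "j \<in> {..<K}"
    thus "lam j \<le> \<Lambda>" using le by auto
    show "0 \<le> a j * a j * ip N (q j) (q j)" using ip_nonneg[of N "q j"] by simp
  qed
  also have "\<dots> = \<Lambda> * ip N f f" by (simp add: ff sum_distrib_left)
  finally show "ip N f (Lop N M f) \<le> \<Lambda> * ip N f f" .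
qed

lemma homog_solution:
  fixes g :: "nat \<Rightarrow> nat \<Rightarrow> real" and E J :: "nat set"
  assumes "finite E" "finite J" "card E < card J"
  shows "\<exists>a. (\<exists>j\<in>J. a j \<noteq> 0) \<and> (\<forall>v\<in>E. (\<Sum>j\<in>J. g v j * a j) = 0)"
  using assms
proof (induction E arbitrary: J g rule: finite_induct)
  case empty
  then obtain j where "j \<in> J" by (metis card.empty all_not_in_conv less_irrefl)
  thus ?case by (intro exI[of _ "\<lambda>_. 1"]) auto
next
  case (insert e E)
  show ?case
  proof (cases "\<forall>j\<in>J. g e j = 0")
    case True
    have "card E < card J" using insert by simp
    then obtain a where a: "\<exists>j\<in>J. a j \<noteq> 0" "\<forall>v\<in>E. (\<Sum>j\<in>J. g v j * a j) = 0"
      using insert.IH[OF insert.prems(1)] by blast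
    show ?thesis using a True by (intro exI[of _ a]) auto
  next
    case False
    then obtain j0 where j0: "j0 \<in> J" "g e j0 \<noteq> 0" by blast
    define J' where "J' = J - {j0}"
    have fJ': "finite J'" using insert by (simp add: J'_def)
    have cJ': "card E < card J'"
      using insert j0 by (simp add: J'_def card_Diff_singleton)
    define g' where "g' = (\<lambda>v j. g v j - g v j0 * g e j / g e j0)"
    obtain a' where a': "\<exists>j\<in>J'. a' j \<noteq> 0" "\<forall>v\<in>E. (\<Sum>j\<in>J'. g' v j * a' j) = 0"
      using insert.IH[OF fJ' cJ', of g'] by blast
    define S where "S = (\<Sum>j\<in>J'. g e j * a' j)"
    define a where "a = a'(j0 := - S / g e j0)"
    have split: "\<And>v. (\<Sum>j\<in>J. g v j * a j) = g v j0 * a j0 + (\<Sum>j\<in>J'. g v j * a' j)"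
    proof -
      fix v
      have "(\<Sum>j\<in>J. g v j * a j) = g v j0 * a j0 + (\<Sum>j\<in>J'. g v j * a j)"
        unfolding J'_def using insert j0 by (simp add: sum.remove)
      also have "(\<Sum>j\<in>J'. g v j * a j) = (\<Sum>j\<in>J'. g v j * a' j)"
        by (intro sum.cong) (auto simp: a_def J'_def)
      finally show "(\<Sum>j\<in>J. g v j * a j) = g v j0 * a j0 + (\<Sum>j\<in>J'. g v j * a' j)" .
    qed
    have aj0: "a j0 = - S / g e j0" by (simp add: a_def)
    show ?thesis
    proof (rule exI[of _ a], intro conjI ballI)
      show "\<exists>j\<in>J. a j \<noteq> 0" using a'(1) by (auto simp: a_def J'_def)
    next
      fix v assume v: "v \<in> insert e E"
      show "(\<Sum>j\<in>J. g v j * a j) = 0"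
      proof (cases "v = e")
        case True
        thus ?thesis using j0 by (simp add: split aj0 S_def)
      next
        case False
        hence vE: "v \<in> E" using v by simp
        have "0 = (\<Sum>j\<in>J'. g' v j * a' j)" using a'(2) vE by simp
        also have "\<dots> = (\<Sum>j\<in>J'. g v j * a' j - (g v j0 / g e j0) * (g e j * a' j))"
          by (intro sum.cong) (auto simp: g'_def algebra_simps)
        also have "\<dots> = (\<Sum>j\<in>J'. g v j * a' j) - (g v j0 / g e j0) * S"
          by (simp add: sum_subtractf sum_distrib_left S_def)
        finally have "(\<Sum>j\<in>J'. g v j * a' j) = (g v j0 / g e j0) * S" by simp
        thus ?thesis using j0 by (simp add: split aj0)
      qed
    qed
  qed
qed

lemma sq_split:
  fixes p q y z :: real assumes p: "p > 0" and q: "q > 0"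
  shows "(y + z)^2 \<le> ((p+q)/p) * y^2 + ((p+q)/q) * z^2"
proof -
  have eq: "((p+q)/p) * y^2 + ((p+q)/q) * z^2 - (y+z)^2 = (q*y - p*z)^2 / (p*q)"
    using p q by (simp add: field_simps power2_eq_square)
  have "0 \<le> (q*y - p*z)^2 / (p*q)" using p q by simp
  thus ?thesis using eq by linarith
qed

lemma jensen_sq:
  fixes P y :: "nat \<Rightarrow> real" assumes A: "finite A" and Pn: "\<forall>u\<in>A. P u \<ge> 0" and P1: "(\<Sum>u\<in>A. P u) = 1"
  shows "(\<Sum>u\<in>A. P u * y u)^2 \<le> (\<Sum>u\<in>A. P u * (y u)^2)"
proof -
  define m where "m = (\<Sum>u\<in>A. P u * y u)"
  have "0 \<le> (\<Sum>u\<in>A. P u * (y u - m)^2)" using Pn by (intro sum_nonneg) auto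
  also have "\<dots> = (\<Sum>u\<in>A. (P u * (y u)^2 - 2*m*(P u * y u)) + m^2 * P u)"
    by (intro sum.cong) (auto simp: power2_eq_square algebra_simps)
  also have "\<dots> = (\<Sum>u\<in>A. P u * (y u)^2) - 2*m*(\<Sum>u\<in>A. P u * y u) + m^2 * (\<Sum>u\<in>A. P u)"
    by (simp add: sum.distrib sum_subtractf sum_distrib_left)
  also have "\<dots> = (\<Sum>u\<in>A. P u * (y u)^2) - m^2" using P1 by (simp add: m_def power2_eq_square)
  finally show ?thesis by (simp add: m_def)
qed

definition rho :: "(nat \<Rightarrow> nat \<Rightarrow> real) \<Rightarrow> (nat \<Rightarrow> nat set) \<Rightarrow> nat \<Rightarrow> nat \<Rightarrow> real" where
  "rho w S i j = (\<Prod>l=i..<j. Dm w S l / Km w S l)"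

definition Ef :: "(nat \<Rightarrow> nat \<Rightarrow> real) \<Rightarrow> (nat \<Rightarrow> nat set) \<Rightarrow> (nat \<Rightarrow> real) \<Rightarrow> nat \<Rightarrow> real" where
  "Ef w S f j = (\<Sum>x\<in>S (Suc j). \<Sum>u\<in>S j. w u x * (f x - f u)^2)"

locale layered =
  fixes N :: nat and w :: "nat \<Rightarrow> nat \<Rightarrow> real" and S :: "nat \<Rightarrow> nat set" and n :: nat
  assumes wg: "weighted_graph N w" and part: "is_partition N S n" and Kpos: "\<forall>m<n. Km w S m > 0"

context layered
begin

lemma Ssub: "m \<le> n \<Longrightarrow> S m \<subseteq> {0..<N}" using part unfolding is_partition_def by blast

lemma Sfin: "m \<le> n \<Longrightarrow> finite (S m)" using Ssub finite_subset by blast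

lemma Sin: "m \<le> n \<Longrightarrow> x \<in> S m \<Longrightarrow> x < N" using Ssub by fastforce

lemma wnn: "u < N \<Longrightarrow> v < N \<Longrightarrow> w u v \<ge> 0" using wg unfolding weighted_graph_def by blast

lemma wsym: "u < N \<Longrightarrow> v < N \<Longrightarrow> w u v = w v u" using wg unfolding weighted_graph_def by blast

lemma Sne: "1 \<le> m \<Longrightarrow> m \<le> n \<Longrightarrow> S m \<noteq> {}" using part unfolding is_partition_def by blast

lemma W_ge_K: assumes "j < n" "x \<in> S (Suc j)" shows "Km w S j \<le> wA w (S j) x"
  unfolding Km_def by (rule cInf_le_finite) (use assms Sfin in auto)

lemma W_pos: assumes "j < n" "x \<in> S (Suc j)" shows "wA w (S j) x > 0"
  using W_ge_K[OF assms] Kpos assms(1) by force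

lemma D_ge: assumes "j < n" "u \<in> S j" shows "wA w (S (Suc j)) u \<le> Dm w S j"
  unfolding Dm_def by (rule le_cSup_finite) (use assms Sfin in auto)

lemma D_pos: assumes j: "j < n" shows "Dm w S j > 0"
proof -
  obtain x where x: "x \<in> S (Suc j)" using Sne[of "Suc j"] j by auto
  have "wA w (S j) x > 0" by (rule W_pos[OF j x])
  then obtain u where u: "u \<in> S j" and wux: "w u x > 0"
  proof -
    assume h: "\<And>u. u \<in> S j \<Longrightarrow> 0 < w u x \<Longrightarrow> thesis"
    show thesis
    proof (rule ccontr)
      assume "\<not> thesis"
      hence "\<forall>u\<in>S j. w u x \<le> 0" using h by force
      hence "wA w (S j) x \<le> 0" unfolding wA_def by (intro sum_nonpos) auto
      with \<open>wA w (S j) x > 0\<close> show False by simp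
    qed
  qed
  have xN: "x < N" using Sin[of "Suc j" x] j x by simp
  have uN: "u < N" using Sin[of j u] j u by simp
  have "w x u \<le> wA w (S (Suc j)) u"
    unfolding wA_def by (rule member_le_sum) (use x Sfin[of "Suc j"] j uN Sin[of "Suc j"] wnn in auto)
  moreover have "w x u = w u x" using wsym xN uN by simp
  ultimately show ?thesis using D_ge[OF j u] wux by linarith
qed

lemma rho_pos: "j \<le> n \<Longrightarrow> rho w S i j > 0"
  unfolding rho_def using D_pos Kpos by (intro prod_pos) auto

lemma Ef_nn: assumes j: "j < n" shows "Ef w S f j \<ge> 0"
  unfolding Ef_def
proof (intro sum_nonneg mult_nonneg_nonneg)
  fix x u assume "x \<in> S (Suc j)" "u \<in> S j"
  thus "0 \<le> w u x" using Sin[of "Suc j" x] Sin[of j u] j wnn by simp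
qed simp

end

context layered
begin

lemma hardy_step:
  fixes \<alpha> f :: "nat \<Rightarrow> real"
  assumes apos: "\<forall>i. 1 \<le> i \<and> i \<le> n \<longrightarrow> \<alpha> i > 0"
    and f0: "\<forall>v\<in>S 0. f v = 0"
  shows "j \<le> n \<Longrightarrow> \<forall>\<psi> B. B \<ge> 0 \<longrightarrow> (\<forall>x\<in>S j. 0 \<le> \<psi> x \<and> \<psi> x \<le> B) \<longrightarrow>
     (\<Sum>x\<in>S j. \<psi> x * (f x)^2) \<le> 2 * (\<Sum>i=1..j. \<alpha> i) * (\<Sum>i=1..j. B * rho w S i j / Km w S (i-1) * Ef w S f (i-1) / \<alpha> i)"
proof (induction j)
  case 0
  show ?case using f0 by simp
next
  case (Suc j)
  have jn: "j < n" using Suc.prems by simp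
  note IH = Suc.IH[OF less_imp_le[OF jn]]
  show ?case
  proof (intro allI impI)
    fix \<psi> :: "nat \<Rightarrow> real" and B :: real
    assume B: "B \<ge> 0" and \<psi>: "\<forall>x\<in>S (Suc j). 0 \<le> \<psi> x \<and> \<psi> x \<le> B"
    define s where "s = (\<Sum>i=1..j. \<alpha> i)"
    define al where "al = \<alpha> (Suc j)"
    have alpos: "al > 0" using apos jn by (simp add: al_def)
    have s_nn: "s \<ge> 0" unfolding s_def using apos jn by (intro sum_nonneg) (auto intro: less_imp_le)
    have s'eq: "(\<Sum>i=1..Suc j. \<alpha> i) = s + al" by (simp add: s_def al_def)
    define a where "a = 2*(s+al) / (2*s + al)"
    define b where "b = 2*(s+al) / al"
    define K where "K = Km w S j"
    define D where "D = Dm w S j"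
    have Kp: "K > 0" using Kpos jn by (simp add: K_def)
    have Dp: "D > 0" using D_pos jn by (simp add: D_def)
    define W where "W = (\<lambda>x. wA w (S j) x)"
    define P where "P = (\<lambda>u x. w u x / W x)"
    have finj: "finite (S j)" using Sfin jn by simp
    have finSj: "finite (S (Suc j))" using Sfin jn by simp
    have inj: "\<And>u. u \<in> S j \<Longrightarrow> u < N" using Sin[of j] jn by simp
    have inSj: "\<And>x. x \<in> S (Suc j) \<Longrightarrow> x < N" using Sin[of "Suc j"] jn by simp
    have WK: "\<And>x. x \<in> S (Suc j) \<Longrightarrow> K \<le> W x" unfolding K_def W_def using W_ge_K jn by simp
    have Pn: "\<And>u x. u \<in> S j \<Longrightarrow> x \<in> S (Suc j) \<Longrightarrow> 0 \<le> P u x"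
      unfolding P_def using WK Kp inj inSj wnn by (meson divide_nonneg_pos less_le_trans)
    have PK: "\<And>u x. u \<in> S j \<Longrightarrow> x \<in> S (Suc j) \<Longrightarrow> P u x \<le> w u x / K"
      unfolding P_def using WK Kp inj inSj wnn by (meson divide_left_mono mult_pos_pos less_le_trans)
    have apos': "a > 0" unfolding a_def using s_nn alpos by simp
    have bpos: "b > 0" unfolding b_def using s_nn alpos by simp
    have pw: "\<forall>x\<in>S (Suc j). (f x)^2 \<le> a * (\<Sum>u\<in>S j. P u x * (f u)^2) + b * (\<Sum>u\<in>S j. P u x * (f x - f u)^2)"
    proof
      fix x assume x: "x \<in> S (Suc j)"
      have Wp: "W x > 0" using WK[OF x] Kp by simp
      have P1: "(\<Sum>u\<in>S j. P u x) = 1"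
        unfolding P_def using Wp by (simp add: sum_divide_distrib[symmetric] W_def wA_def)
      have fx: "f x = (\<Sum>u\<in>S j. P u x * f u) + (\<Sum>u\<in>S j. P u x * (f x - f u))"
      proof -
        have "(\<Sum>u\<in>S j. P u x * f u) + (\<Sum>u\<in>S j. P u x * (f x - f u)) = (\<Sum>u\<in>S j. P u x * f x)"
          by (simp add: sum.distrib[symmetric] algebra_simps)
        also have "\<dots> = f x" using P1 by (simp add: sum_distrib_right[symmetric])
        finally show ?thesis by simp
      qed
      have "(f x)^2 \<le> ((2*s+al+al)/(2*s+al)) * (\<Sum>u\<in>S j. P u x * f u)^2 + ((2*s+al+al)/al) * (\<Sum>u\<in>S j. P u x * (f x - f u))^2"
        by (subst fx, rule sq_split) (use s_nn alpos in auto)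
      also have "(2*s+al+al)/(2*s+al) = a" by (simp add: a_def algebra_simps)
      also have "(2*s+al+al)/al = b" by (simp add: b_def algebra_simps)
      also have "a * (\<Sum>u\<in>S j. P u x * f u)^2 \<le> a * (\<Sum>u\<in>S j. P u x * (f u)^2)"
        using jensen_sq[OF finj _ P1] Pn x apos' by (intro mult_left_mono) auto
      also have "b * (\<Sum>u\<in>S j. P u x * (f x - f u))^2 \<le> b * (\<Sum>u\<in>S j. P u x * (f x - f u)^2)"
        using jensen_sq[OF finj _ P1, of "\<lambda>u. f x - f u"] Pn x bpos by (intro mult_left_mono) auto
      finally show "(f x)^2 \<le> a * (\<Sum>u\<in>S j. P u x * (f u)^2) + b * (\<Sum>u\<in>S j. P u x * (f x - f u)^2)"
        by simp
    qed
    define T1 where "T1 = (\<Sum>x\<in>S (Suc j). \<psi> x * (\<Sum>u\<in>S j. P u x * (f u)^2))"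
    define T2 where "T2 = (\<Sum>x\<in>S (Suc j). \<psi> x * (\<Sum>u\<in>S j. P u x * (f x - f u)^2))"
    have step1: "(\<Sum>x\<in>S (Suc j). \<psi> x * (f x)^2) \<le> a * T1 + b * T2"
    proof -
      have "(\<Sum>x\<in>S (Suc j). \<psi> x * (f x)^2) \<le> (\<Sum>x\<in>S (Suc j). \<psi> x * (a * (\<Sum>u\<in>S j. P u x * (f u)^2) + b * (\<Sum>u\<in>S j. P u x * (f x - f u)^2)))"
        by (intro sum_mono mult_left_mono) (use pw \<psi> in auto)
      also have "\<dots> = (\<Sum>x\<in>S (Suc j). a * (\<psi> x * (\<Sum>u\<in>S j. P u x * (f u)^2)) + b * (\<psi> x * (\<Sum>u\<in>S j. P u x * (f x - f u)^2)))"
        by (intro sum.cong) (auto simp: algebra_simps)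
      also have "\<dots> = a * T1 + b * T2"
        by (simp add: T1_def T2_def sum.distrib sum_distrib_left)
      finally show ?thesis .
    qed
    define \<psi>' where "\<psi>' = (\<lambda>u. \<Sum>x\<in>S (Suc j). \<psi> x * P u x)"
    have T1eq: "T1 = (\<Sum>u\<in>S j. \<psi>' u * (f u)^2)"
    proof -
      have "T1 = (\<Sum>x\<in>S (Suc j). \<Sum>u\<in>S j. \<psi> x * P u x * (f u)^2)"
        by (simp add: T1_def sum_distrib_left mult.assoc)
      also have "\<dots> = (\<Sum>u\<in>S j. \<Sum>x\<in>S (Suc j). \<psi> x * P u x * (f u)^2)" by (rule sum.swap)
      also have "\<dots> = (\<Sum>u\<in>S j. \<psi>' u * (f u)^2)" by (simp add: \<psi>'_def sum_distrib_right)
      finally show ?thesis .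
    qed
    have \<psi>'b: "\<forall>u\<in>S j. 0 \<le> \<psi>' u \<and> \<psi>' u \<le> B * D / K"
    proof
      fix u assume u: "u \<in> S j"
      have "0 \<le> \<psi>' u" unfolding \<psi>'_def using \<psi> Pn u by (intro sum_nonneg mult_nonneg_nonneg) auto
      moreover have "\<psi>' u \<le> (\<Sum>x\<in>S (Suc j). B * (w u x / K))"
        unfolding \<psi>'_def
      proof (intro sum_mono mult_mono)
        fix x assume x: "x \<in> S (Suc j)"
        show "\<psi> x \<le> B" using \<psi> x by auto
        show "P u x \<le> w u x / K" by (rule PK[OF u x])
        show "0 \<le> B" by (rule B)
        show "0 \<le> P u x" by (rule Pn[OF u x])
      qed
      moreover have "(\<Sum>x\<in>S (Suc j). B * (w u x / K)) = (B / K) * wA w (S (Suc j)) u"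
        unfolding wA_def sum_distrib_left
        by (intro sum.cong) (use wsym inj inSj u in auto)
      moreover have "(B / K) * wA w (S (Suc j)) u \<le> (B / K) * D"
        unfolding D_def by (intro mult_left_mono D_ge) (use jn u B Kp in auto)
      ultimately show "0 \<le> \<psi>' u \<and> \<psi>' u \<le> B * D / K" by simp
    qed
    define X where "X = (\<Sum>i=1..j. B * rho w S i (Suc j) / Km w S (i-1) * Ef w S f (i-1) / \<alpha> i)"
    have T1b: "T1 \<le> 2 * s * X"
    proof -
      have "T1 \<le> 2 * s * (\<Sum>i=1..j. (B * D / K) * rho w S i j / Km w S (i-1) * Ef w S f (i-1) / \<alpha> i)"
        unfolding T1eq s_def by (rule IH[rule_format, where \<psi>=\<psi>' and B="B*D/K"]) (use \<psi>'b B Dp Kp in auto)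
      also have "(\<Sum>i=1..j. (B * D / K) * rho w S i j / Km w S (i-1) * Ef w S f (i-1) / \<alpha> i) = X"
        unfolding X_def
      proof (intro sum.cong refl)
        fix i assume i: "i \<in> {1..j}"
        have "rho w S i (Suc j) = rho w S i j * (D / K)"
          unfolding rho_def D_def K_def using i by (simp add: prod.atLeastLessThan_Suc)
        thus "(B * D / K) * rho w S i j / Km w S (i-1) * Ef w S f (i-1) / \<alpha> i
            = B * rho w S i (Suc j) / Km w S (i-1) * Ef w S f (i-1) / \<alpha> i" by simp
      qed
      finally show ?thesis .
    qed
    have X_nn: "X \<ge> 0" unfolding X_def
    proof (intro sum_nonneg)
      fix i assume i: "i \<in> {1..j}"
      have "rho w S i (Suc j) > 0" using rho_pos jn by simp
      moreover have "Km w S (i-1) > 0"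
      proof -
        have "i - 1 < n" using i jn by auto
        thus ?thesis using Kpos by blast
      qed
      moreover have "Ef w S f (i-1) \<ge> 0"
      proof -
        have "i - 1 < n" using i jn by auto
        thus ?thesis by (rule Ef_nn)
      qed
      moreover have "\<alpha> i > 0" using apos i jn by simp
      ultimately show "0 \<le> B * rho w S i (Suc j) / Km w S (i-1) * Ef w S f (i-1) / \<alpha> i"
        using B by simp
    qed
    have T2b: "T2 \<le> (B / K) * Ef w S f j"
    proof -
      have "T2 \<le> (\<Sum>x\<in>S (Suc j). B * (\<Sum>u\<in>S j. (w u x / K) * (f x - f u)^2))"
        unfolding T2_def
      proof (rule sum_mono)
        fix x assume x: "x \<in> S (Suc j)"
        have inner: "(\<Sum>u\<in>S j. P u x * (f x - f u)^2) \<le> (\<Sum>u\<in>S j. (w u x / K) * (f x - f u)^2)"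
          by (intro sum_mono mult_right_mono PK[OF _ x]) auto
        have nn: "0 \<le> (\<Sum>u\<in>S j. P u x * (f x - f u)^2)"
          using Pn x by (intro sum_nonneg) auto
        show "\<psi> x * (\<Sum>u\<in>S j. P u x * (f x - f u)^2) \<le> B * (\<Sum>u\<in>S j. (w u x / K) * (f x - f u)^2)"
          by (rule mult_mono) (use \<psi> x inner nn B in auto)
      qed
      also have "\<dots> = (B / K) * Ef w S f j"
        unfolding Ef_def sum_distrib_left by (intro sum.cong) (auto simp: algebra_simps)
      finally show ?thesis .
    qed
    have "(\<Sum>x\<in>S (Suc j). \<psi> x * (f x)^2) \<le> a * (2 * s * X) + b * ((B / K) * Ef w S f j)"
      using step1 T1b T2b apos' bpos by (smt (verit) mult_left_mono)
    also have "a * (2 * s * X) \<le> 2 * (s + al) * X"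
    proof -
      have "a * (2 * s) \<le> 2 * (s + al)"
      proof (cases "s = 0")
        case True thus ?thesis using alpos by simp
      next
        case False
        hence sp: "s > 0" using s_nn by simp
        have "a * (2 * s) = 2 * (s + al) * (2 * s / (2 * s + al))" by (simp add: a_def)
        also have "2 * s / (2 * s + al) \<le> 1" using sp alpos by simp
        hence "2 * (s + al) * (2 * s / (2 * s + al)) \<le> 2 * (s + al) * 1"
          using sp alpos by (intro mult_left_mono) auto
        finally show ?thesis by simp
      qed
      thus ?thesis using X_nn by (metis mult.assoc mult_right_mono)
    qed
    finally have fin: "(\<Sum>x\<in>S (Suc j). \<psi> x * (f x)^2) \<le> 2 * (s + al) * X + b * ((B / K) * Ef w S f j)"
      by simp
    have "(\<Sum>i=1..Suc j. B * rho w S i (Suc j) / Km w S (i-1) * Ef w S f (i-1) / \<alpha> i)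
        = X + B / K * Ef w S f j / al"
    proof -
      have "(\<Sum>i=1..Suc j. B * rho w S i (Suc j) / Km w S (i-1) * Ef w S f (i-1) / \<alpha> i)
         = X + B * rho w S (Suc j) (Suc j) / Km w S (Suc j - 1) * Ef w S f (Suc j - 1) / \<alpha> (Suc j)"
        unfolding X_def by (rule sum.cl_ivl_Suc[THEN trans]) simp
      also have "rho w S (Suc j) (Suc j) = 1" by (simp add: rho_def)
      finally show ?thesis by (simp add: K_def al_def)
    qed
    moreover have "b * ((B / K) * Ef w S f j) = 2 * (s + al) * (B / K * Ef w S f j / al)"
      by (simp add: b_def)
    ultimately show "(\<Sum>x\<in>S (Suc j). \<psi> x * (f x)^2) \<le> 2 * (\<Sum>i=1..Suc j. \<alpha> i) *
         (\<Sum>i=1..Suc j. B * rho w S i (Suc j) / Km w S (i-1) * Ef w S f (i-1) / \<alpha> i)"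
      using fin s'eq by (simp add: distrib_left)
  qed
qed

end

lemma shift_sum1: fixes M :: nat shows "(\<Sum>i=1..M. g (i-1)) = (\<Sum>i<M. (g i :: real))"
  by (induction M) auto

context layered
begin

lemma psum: "(\<Sum>v<N. h v) = (\<Sum>m\<le>n. \<Sum>x\<in>S m. (h x :: real))"
proof -
  have U: "{..<N} = \<Union>(S ` {..n})" using part unfolding is_partition_def by auto
  have "(\<Sum>v\<in>\<Union>(S ` {..n}). h v) = (\<Sum>m\<le>n. \<Sum>x\<in>S m. h x)"
    by (rule sum.UNION_disjoint) (use Sfin part in \<open>auto simp: is_partition_def\<close>)
  thus ?thesis using U by simp
qed

lemma hardy:
  fixes f :: "nat \<Rightarrow> real"
  assumes f0: "\<forall>v\<in>S 0. f v = 0"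
  shows "(\<Sum>v<N. (f v)^2) \<le> 2 * (delta2 w S n)^2 * (\<Sum>i<n. Ef w S f i)"
proof -
  define sM where "sM = (\<lambda>M. \<Sum>j=1..M. (1 / Km w S (j - 1)) * (\<Prod>i=j..<M. Dm w S i / Km w S i))"
  define Et where "Et = (\<Sum>i<n. Ef w S f i)"
  have Et_nn: "Et \<ge> 0" unfolding Et_def using Ef_nn by (intro sum_nonneg) auto
  have termpos: "\<And>M j. M \<le> n \<Longrightarrow> 1 \<le> j \<Longrightarrow> j \<le> n \<Longrightarrow> (1 / Km w S (j - 1)) * (\<Prod>i=j..<M. Dm w S i / Km w S i) > 0"
  proof -
    fix M j :: nat assume M: "M \<le> n" and j: "1 \<le> j" "j \<le> n"
    have "j - 1 < n" using j by auto
    hence "Km w S (j - 1) > 0" using Kpos by blast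
    moreover have "(\<Prod>i=j..<M. Dm w S i / Km w S i) > 0" using rho_pos[OF M] by (simp add: rho_def)
    ultimately show "(1 / Km w S (j - 1)) * (\<Prod>i=j..<M. Dm w S i / Km w S i) > 0" by simp
  qed
  have sM_nn: "\<And>M. M \<le> n \<Longrightarrow> sM M \<ge> 0"
    unfolding sM_def using termpos by (intro sum_nonneg less_imp_le) auto
  have delta: "(delta2 w S n)^2 = (\<Sum>M=1..n. sM M)"
  proof -
    have "(\<Sum>M=1..n. sM M) \<ge> 0" using sM_nn by (intro sum_nonneg) auto
    thus ?thesis unfolding delta2_def sM_def by simp
  qed
  have each: "\<And>M. 1 \<le> M \<Longrightarrow> M \<le> n \<Longrightarrow> (\<Sum>x\<in>S M. (f x)^2) \<le> 2 * sM M * Et"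
  proof -
    fix M :: nat assume M1: "1 \<le> M" and Mn: "M \<le> n"
    define \<alpha> where "\<alpha> = (\<lambda>i. (1 / Km w S (i - 1)) * (\<Prod>l=i..<M. Dm w S l / Km w S l))"
    have apos: "\<forall>i. 1 \<le> i \<and> i \<le> n \<longrightarrow> \<alpha> i > 0" unfolding \<alpha>_def using termpos Mn by blast
    have H: "(\<Sum>x\<in>S M. 1 * (f x)^2) \<le> 2 * (\<Sum>i=1..M. \<alpha> i) * (\<Sum>i=1..M. 1 * rho w S i M / Km w S (i-1) * Ef w S f (i-1) / \<alpha> i)"
      by (rule hardy_step[OF apos f0 Mn, rule_format]) auto
    have s1: "(\<Sum>i=1..M. \<alpha> i) = sM M" by (simp add: \<alpha>_def sM_def)
    have s2: "(\<Sum>i=1..M. 1 * rho w S i M / Km w S (i-1) * Ef w S f (i-1) / \<alpha> i) = (\<Sum>i=1..M. Ef w S f (i-1))"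
    proof (intro sum.cong refl)
      fix i assume i: "i \<in> {1..M}"
      have "\<alpha> i > 0" using apos i Mn by auto
      moreover have "1 * rho w S i M / Km w S (i-1) = \<alpha> i" by (simp add: \<alpha>_def rho_def)
      ultimately show "1 * rho w S i M / Km w S (i-1) * Ef w S f (i-1) / \<alpha> i = Ef w S f (i-1)" by simp
    qed
    have s3: "(\<Sum>i=1..M. Ef w S f (i-1)) \<le> Et"
    proof -
      have "(\<Sum>i=1..M. Ef w S f (i-1)) = (\<Sum>i<M. Ef w S f i)" by (rule shift_sum1)
      also have "\<dots> \<le> Et" unfolding Et_def by (rule sum_mono2) (use Mn Ef_nn in auto)
      finally show ?thesis .
    qed
    have "(\<Sum>x\<in>S M. (f x)^2) \<le> 2 * sM M * (\<Sum>i=1..M. Ef w S f (i-1))" using H s1 s2 by simp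
    also have "\<dots> \<le> 2 * sM M * Et" using s3 sM_nn[OF Mn] by (intro mult_left_mono) auto
    finally show "(\<Sum>x\<in>S M. (f x)^2) \<le> 2 * sM M * Et" .
  qed
  have "(\<Sum>v<N. (f v)^2) = (\<Sum>m\<le>n. \<Sum>x\<in>S m. (f x)^2)" by (rule psum)
  also have "\<dots> = (\<Sum>x\<in>S 0. (f x)^2) + (\<Sum>m=1..n. \<Sum>x\<in>S m. (f x)^2)"
  proof -
    have "{..n} = insert 0 {1..n}" by auto
    thus ?thesis by simp
  qed
  also have "(\<Sum>x\<in>S 0. (f x)^2) = 0" using f0 by simp
  also have "(\<Sum>m=1..n. \<Sum>x\<in>S m. (f x)^2) \<le> (\<Sum>m=1..n. 2 * sM m * Et)"
    using each by (intro sum_mono) auto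
  also have "\<dots> = 2 * (\<Sum>m=1..n. sM m) * Et" by (simp add: sum_distrib_left sum_distrib_right mult.assoc)
  finally show ?thesis by (simp add: delta Et_def)
qed

lemma energy:
  fixes f :: "nat \<Rightarrow> real"
  shows "2 * (\<Sum>i<n. Ef w S f i) \<le> (\<Sum>x<N. \<Sum>y<N. w x y * (f x - f y)^2)"
proof -
  define g where "g = (\<lambda>x y. w x y * (f x - f y)^2)"
  define G where "G = (\<lambda>m m'. \<Sum>x\<in>S m. \<Sum>y\<in>S m'. g x y)"
  have Gnn: "\<And>m m'. m \<le> n \<Longrightarrow> m' \<le> n \<Longrightarrow> G m m' \<ge> 0"
    unfolding G_def g_def using Sin wnn by (intro sum_nonneg mult_nonneg_nonneg) auto
  have "(\<Sum>x<N. \<Sum>y<N. g x y) = (\<Sum>x<N. \<Sum>m'\<le>n. \<Sum>y\<in>S m'. g x y)"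
    by (intro sum.cong refl psum)
  also have "\<dots> = (\<Sum>m\<le>n. \<Sum>x\<in>S m. \<Sum>m'\<le>n. \<Sum>y\<in>S m'. g x y)" by (rule psum)
  also have "\<dots> = (\<Sum>m\<le>n. \<Sum>m'\<le>n. G m m')"
    unfolding G_def by (intro sum.cong refl sum.swap)
  also have "\<dots> = (\<Sum>p\<in>{..n} \<times> {..n}. G (fst p) (snd p))"
    by (simp add: sum.cartesian_product split_beta)
  finally have tot: "(\<Sum>x<N. \<Sum>y<N. g x y) = (\<Sum>p\<in>{..n} \<times> {..n}. G (fst p) (snd p))" .
  define A where "A = (\<lambda>m. (m, Suc m)) ` {..<n}"
  define Bs where "Bs = (\<lambda>m. (Suc m, m)) ` {..<n}"
  have dis: "A \<inter> Bs = {}" unfolding A_def Bs_def by auto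
  have sub: "A \<union> Bs \<subseteq> {..n} \<times> {..n}" unfolding A_def Bs_def by auto
  have "(\<Sum>p\<in>A \<union> Bs. G (fst p) (snd p)) \<le> (\<Sum>p\<in>{..n} \<times> {..n}. G (fst p) (snd p))"
    by (rule sum_mono2) (use sub Gnn in auto)
  moreover have "(\<Sum>p\<in>A \<union> Bs. G (fst p) (snd p)) = (\<Sum>p\<in>A. G (fst p) (snd p)) + (\<Sum>p\<in>Bs. G (fst p) (snd p))"
    by (rule sum.union_disjoint) (use dis in \<open>auto simp: A_def Bs_def\<close>)
  moreover have "(\<Sum>p\<in>A. G (fst p) (snd p)) = (\<Sum>m<n. G m (Suc m))"
    unfolding A_def by (subst sum.reindex) (auto simp: inj_on_def)
  moreover have "(\<Sum>p\<in>Bs. G (fst p) (snd p)) = (\<Sum>m<n. G (Suc m) m)"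
    unfolding Bs_def by (subst sum.reindex) (auto simp: inj_on_def)
  moreover have "\<And>m. m < n \<Longrightarrow> G m (Suc m) = Ef w S f m"
  proof -
    fix m assume m: "m < n"
    have "G m (Suc m) = (\<Sum>y\<in>S (Suc m). \<Sum>x\<in>S m. g x y)" unfolding G_def by (rule sum.swap)
    also have "\<dots> = Ef w S f m" unfolding Ef_def g_def
      by (intro sum.cong refl) (simp add: power2_commute)
    finally show "G m (Suc m) = Ef w S f m" .
  qed
  moreover have "\<And>m. m < n \<Longrightarrow> G (Suc m) m = Ef w S f m"
  proof -
    fix m assume m: "m < n"
    show "G (Suc m) m = Ef w S f m" unfolding G_def Ef_def g_def
    proof (intro sum.cong refl)
      fix x y assume x: "x \<in> S (Suc m)" and y: "y \<in> S m"
      have "x < N" "y < N" using Sin[of "Suc m" x] Sin[of m y] x y m by auto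
      thus "w x y * (f x - f y)^2 = w y x * (f x - f y)^2" using wsym by simp
    qed
  qed
  ultimately show ?thesis using tot unfolding g_def by simp
qed

end

lemma quad_form:
  fixes w :: "nat \<Rightarrow> nat \<Rightarrow> real" and f :: "nat \<Rightarrow> real"
  assumes sym: "\<forall>u<N. \<forall>v<N. w u v = w v u"
  shows "2 * ip N f (Lop N (\<lambda>x y. laplacian N w $$ (x,y)) f) = (\<Sum>x<N. \<Sum>y<N. w x y * (f x - f y)^2)"
proof -
  have L: "\<And>x. x < N \<Longrightarrow> Lop N (\<lambda>x y. laplacian N w $$ (x,y)) f x = (\<Sum>y<N. w x y * (f x - f y))"
  proof -
    fix x assume x: "x < N"
    have "Lop N (\<lambda>x y. laplacian N w $$ (x,y)) f x
        = (\<Sum>y<N. (if x = y then (\<Sum>z<N. w x z) * f y else 0) - w x y * f y)"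
      unfolding Lop_def laplacian_def using x by (intro sum.cong) (auto simp: algebra_simps)
    also have "\<dots> = (\<Sum>z<N. w x z) * f x - (\<Sum>y<N. w x y * f y)"
      using x by (simp add: sum_subtractf)
    also have "\<dots> = (\<Sum>y<N. w x y * (f x - f y))"
    proof -
      have "(\<Sum>y<N. w x y * (f x - f y)) = (\<Sum>y<N. f x * w x y) - (\<Sum>y<N. w x y * f y)"
        by (simp add: right_diff_distrib sum_subtractf mult.commute)
      also have "(\<Sum>y<N. f x * w x y) = (\<Sum>z<N. w x z) * f x" by (simp add: sum_distrib_left mult.commute)
      finally show ?thesis by simp
    qed
    finally show "Lop N (\<lambda>x y. laplacian N w $$ (x,y)) f x = (\<Sum>y<N. w x y * (f x - f y))" .
  qed
  define Q where "Q = (\<Sum>x<N. \<Sum>y<N. w x y * (f x * (f x - f y)))"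
  have Qeq: "ip N f (Lop N (\<lambda>x y. laplacian N w $$ (x,y)) f) = Q"
    unfolding ip_def Q_def using L by (simp add: sum_distrib_left mult.left_commute)
  have "Q = (\<Sum>y<N. \<Sum>x<N. w x y * (f x * (f x - f y)))" unfolding Q_def by (rule sum.swap)
  also have "\<dots> = (\<Sum>x<N. \<Sum>y<N. w x y * (- f y * (f x - f y)))"
    using sym by (intro sum.cong refl) (auto simp: algebra_simps)
  finally have Q2: "Q = (\<Sum>x<N. \<Sum>y<N. w x y * (- f y * (f x - f y)))" .
  have "2 * Q = Q + Q" by simp
  also have "\<dots> = (\<Sum>x<N. \<Sum>y<N. w x y * (f x * (f x - f y))) + (\<Sum>x<N. \<Sum>y<N. w x y * (- f y * (f x - f y)))"
    by (subst (2) Q2) (simp only: Q_def)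
  also have "\<dots> = (\<Sum>x<N. \<Sum>y<N. w x y * (f x * (f x - f y)) + w x y * (- f y * (f x - f y)))"
    by (simp only: sum.distrib[symmetric])
  also have "\<dots> = (\<Sum>x<N. \<Sum>y<N. w x y * (f x - f y)^2)"
    by (intro sum.cong refl) (simp add: power2_eq_square algebra_simps)
  finally show ?thesis using Qeq by simp
qed

theorem corollary3p5:
  fixes N :: nat and w :: "nat \<Rightarrow> nat \<Rightarrow> real" and lam :: "real list"
    and k n :: nat and S :: "nat \<Rightarrow> nat set"
  assumes "weighted_graph N w" and "connected_wg N w"
    and "length lam = N" and "sorted lam"
    and "char_poly (laplacian N w) = (\<Prod>a\<leftarrow>lam. [:- a, 1:])"
    and "k < N"
    and "card (S 0) \<le> k"
    and "is_partition N S n"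
    and "\<forall>m<n. Km w S m > 0"
  shows "lam ! k \<ge> inverse (2 * (delta2 w S n)\<^sup>2)"
proof -
  note wg = assms(1) and len = assms(3) and srt = assms(4) and cp = assms(5) and kN = assms(6)
    and cardS = assms(7) and part = assms(8) and Kpos = assms(9)
  interpret layered N w S n using wg part Kpos by unfold_locales
  define A where "A = laplacian N w"
  have Acar: "A \<in> carrier_mat N N" unfolding A_def laplacian_def by simp
  define M where "M = (\<lambda>x y. A $$ (x, y))"
  have Msym: "\<forall>x<N. \<forall>y<N. M x y = M y x"
    unfolding M_def A_def laplacian_def using wsym by auto
  obtain p Bf where p1: "\<forall>j<N. \<forall>x<N. (\<Sum>y<N. A$$(x,y) * p j y) = (\<Sum>l\<le>j. Bf l j * p l x)"
    and p2: "\<forall>j<N. Bf j j = lam ! j"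
    and p3: "\<forall>a. (\<forall>x<N. (\<Sum>j<N. a j * p j x) = 0) \<longrightarrow> (\<forall>j<N. a j = 0)"
    using schur_functions[OF Acar cp[folded A_def]] by blast
  have tri: "\<forall>j<N. \<forall>x<N. Lop N M (p j) x = (\<Sum>l\<le>j. Bf l j * p l x)"
    using p1 by (simp add: Lop_def M_def)
  obtain q where q: "\<forall>j<N. inspan N p j (\<lambda>x. q j x - p j x) \<and> inspan N q (Suc j) (p j)
          \<and> (\<forall>x<N. Lop N M (q j) x = (\<lambda>j. lam ! j) j * q j x) \<and> (\<forall>i<j. ip N (q i) (q j) = 0)"
    using gs_eigen[OF Msym tri _ p3, of "\<lambda>j. lam ! j" N] p2 by auto
  have S0fin: "finite (S 0)" using Sfin by simp
  obtain a where a1: "\<exists>j\<in>{..k}. a j \<noteq> 0" and a2: "\<forall>v\<in>S 0. (\<Sum>j\<in>{..k}. q j v * a j) = 0"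
    using homog_solution[OF S0fin, of "{..k}" "\<lambda>v j. q j v"] cardS by auto
  define f where "f = (\<lambda>x. \<Sum>j<Suc k. a j * q j x)"
  have f0: "\<forall>v\<in>S 0. f v = 0"
    using a2 by (simp add: f_def lessThan_Suc_atMost mult.commute)
  have orthK: "\<forall>j<Suc k. \<forall>i<j. ip N (q i) (q j) = 0" using q kN by auto
  have eigK: "\<forall>j<Suc k. \<forall>x<N. Lop N M (q j) x = lam ! j * q j x" using q kN by auto
  have leK: "\<forall>j<Suc k. lam ! j \<le> lam ! k" using srt len kN by (auto intro: sorted_nth_mono)
  have R1: "ip N f (Lop N M f) \<le> lam ! k * ip N f f"
    and R2: "ip N f f = (\<Sum>j<Suc k. a j * a j * ip N (q j) (q j))"
    using rayleigh[OF Msym orthK eigK leK f_def] by auto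
  have ffpos: "ip N f f > 0"
  proof -
    obtain j0 where j0: "j0 \<le> k" "a j0 \<noteq> 0" using a1 by auto
    have "ip N (q j0) (q j0) > 0"
      by (rule nonzero_from_span[where j=j0, OF p3]) (use j0 kN q in auto)
    moreover have "a j0 * a j0 > 0" using j0(2) by (auto simp: zero_less_mult_iff linorder_neq_iff)
    ultimately have "a j0 * a j0 * ip N (q j0) (q j0) > 0" by simp
    moreover have "\<And>j. 0 \<le> a j * a j * ip N (q j) (q j)" using ip_nonneg by simp
    ultimately have "(\<Sum>j<Suc k. a j * a j * ip N (q j) (q j)) > 0"
      using j0 by (intro sum_pos2[of _ j0]) auto
    thus ?thesis using R2 by simp
  qed
  define Et where "Et = (\<Sum>i<n. Ef w S f i)"
  have Hd: "ip N f f \<le> 2 * (delta2 w S n)^2 * Et"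
    using hardy[OF f0] unfolding Et_def ip_def by (simp add: power2_eq_square)
  have EQ: "Et \<le> ip N f (Lop N M f)"
  proof -
    have "2 * Et \<le> (\<Sum>x<N. \<Sum>y<N. w x y * (f x - f y)^2)" unfolding Et_def by (rule energy)
    also have "\<dots> = 2 * ip N f (Lop N M f)"
      unfolding M_def A_def by (rule quad_form[symmetric]) (use wsym in auto)
    finally show ?thesis by simp
  qed
  have d_nn: "(delta2 w S n)^2 \<ge> 0" by simp
  have "ip N f f \<le> 2 * (delta2 w S n)^2 * (lam ! k * ip N f f)"
  proof -
    have "ip N f f \<le> 2 * (delta2 w S n)^2 * Et" by (rule Hd)
    also have "\<dots> \<le> 2 * (delta2 w S n)^2 * ip N f (Lop N M f)" using EQ d_nn by (intro mult_left_mono) auto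
    also have "\<dots> \<le> 2 * (delta2 w S n)^2 * (lam ! k * ip N f f)" using R1 d_nn by (intro mult_left_mono) auto
    finally show ?thesis .
  qed
  hence one: "1 \<le> 2 * (delta2 w S n)^2 * lam ! k" using ffpos
    by (metis mult.assoc mult.commute mult_le_cancel_left2 mult_le_cancel_right1) 
  hence dpos: "2 * (delta2 w S n)^2 > 0" using d_nn
    by (metis less_eq_real_def mult_eq_0_iff not_one_le_zero mult_pos_pos zero_less_numeral)
  show ?thesis using one dpos by (simp add: field_simps)
qed


end
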